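(* $\mathsf{LPO}'\equiv_{sW}\mathsf{NEG}$, where $\mathsf{NEG}:\mathcal A_-(2^\mathbb N)\to\{0,1\}$ is given by $\mathsf{NEG}(A)=1$ if $\mu(A)=0$ and $\mathsf{NEG}(A)=0$ otherwise ($\mu$ the uniform measure on $2^\mathbb N$).
   Context: A problem $f:\subseteq X\rightrightarrows Y$ between represented spaces is a partial multi-valued map; $F\vdash f$ means $\delta_YF(p)\in f(\delta_X(p))$ whenever $\delta_X(p)\in\mathrm{dom}(f)$; $f\le_{sW}g$ iff there are computable $H,K$ with $HGK\vdash f$ for all $G\vdash g$, $\equiv_{sW}$ the induced equivalence. $\{0,1\}$ is represented by $p\mapsto p(0)$. $\mathsf{LPO}:\mathbb N^\mathbb N\to\{0,1\}$, $\mathsf{LPO}(p)=0\iff\exists n\;p(n)=0$. $\lim:\subseteq\mathbb{N}^\mathbb{N}\to\mathbb{N}^\mathbb{N}$ maps $\langle p_0,p_1,\dots\rangle$ to $\lim_np_n$; the jump $\mathsf{LPO}'$ is $\mathsf{LPO}$ with input representation $\lim$ (i.e. input $p$ is given via a sequence converging to it). $\mathcal A_-(2^\mathbb N)$ is the space of closed subsets of Cantor space represented by $p\mapsto2^\mathbb N\setminus\bigcup_nB_{p(n)}$ for a standard enumeration $(B_n)$ of basic open balls. *)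

theory Defs
  imports "HOL-Probability.Probability" "HOL-Library.Nat_Bijection"
begin

inductive PR :: "nat \<Rightarrow> (nat list \<Rightarrow> nat) \<Rightarrow> bool" where
  PR_zero: "PR n (\<lambda>_. 0)"
| PR_succ: "PR 1 (\<lambda>xs. Suc (xs ! 0))"
| PR_proj: "i < n \<Longrightarrow> PR n (\<lambda>xs. xs ! i)"
| PR_comp: "PR m g \<Longrightarrow> length fs = m \<Longrightarrow> (\<forall>f\<in>set fs. PR n f) \<Longrightarrow>
            PR n (\<lambda>xs. g (map (\<lambda>f. f xs) fs))"
| PR_rec: "PR n g \<Longrightarrow> PR (n + 2) h \<Longrightarrow>
           PR (Suc n) (\<lambda>xs. rec_nat (g (tl xs)) (\<lambda>k acc. h (k # acc # tl xs)) (hd xs))"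

definition prim_rec1 :: "(nat \<Rightarrow> nat) \<Rightarrow> bool" where
  "prim_rec1 f \<longleftrightarrow> (\<exists>h. PR 1 h \<and> (\<forall>x. f x = h [x]))"

type_synonym baire = "nat \<Rightarrow> nat"
type_synonym 'a rep = "baire \<Rightarrow> 'a option"
type_synonym ('a, 'b) problem = "'a \<Rightarrow> 'b set"     \<comment> \<open>partial multi-valued map\<close>

text \<open>A partial F on Baire space is computable iff some type-2 machine computes F(p) for every
 p in dom F.  Equivalent characterisation: there is a primitive recursive g such that for p in
 dom F and every n, g(<n, code(p|k)>) is nonzero for some k, and every nonzero value equals
 F(p)(n)+1 (g simulates the machine for k steps on the prefix p|k).\<close>
definition computable_baire :: "(baire \<Rightarrow> baire option) \<Rightarrow> bool" where
  "computable_baire F \<longleftrightarrow> (\<exists>g. prim_rec1 g \<and>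
     (\<forall>p q. F p = Some q \<longrightarrow> (\<forall>n.
        (\<exists>k. g (prod_encode (n, list_encode (map p [0..<k]))) \<noteq> 0) \<and>
        (\<forall>k. g (prod_encode (n, list_encode (map p [0..<k]))) \<noteq> 0 \<longrightarrow>
             g (prod_encode (n, list_encode (map p [0..<k]))) = Suc (q n)))))"

definition pdom :: "('a, 'b) problem \<Rightarrow> 'a set" where
  "pdom f = {x. f x \<noteq> {}}"

definition realizes :: "'a rep \<Rightarrow> 'b rep \<Rightarrow> (baire \<Rightarrow> baire option) \<Rightarrow> ('a, 'b) problem \<Rightarrow> bool" where
  "realizes dX dY F f \<longleftrightarrow>
     (\<forall>p x. dX p = Some x \<longrightarrow> x \<in> pdom f \<longrightarrow> (\<exists>q y. F p = Some q \<and> dY q = Some y \<and> y \<in> f x))"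

definition sW_le :: "'a rep \<Rightarrow> ('a, 'b) problem \<Rightarrow> 'b rep \<Rightarrow> 'c rep \<Rightarrow> ('c, 'd) problem \<Rightarrow> 'd rep \<Rightarrow> bool" where
  "sW_le dX f dY dU g dV \<longleftrightarrow>
     (\<exists>H K. computable_baire H \<and> computable_baire K \<and>
        (\<forall>G. realizes dU dV G g \<longrightarrow>
             realizes dX dY (\<lambda>p. Option.bind (K p) (\<lambda>r. Option.bind (G r) H)) f))"

definition sW_eq :: "'a rep \<Rightarrow> ('a, 'b) problem \<Rightarrow> 'b rep \<Rightarrow> 'c rep \<Rightarrow> ('c, 'd) problem \<Rightarrow> 'd rep \<Rightarrow> bool" where
  "sW_eq dX f dY dU g dV \<longleftrightarrow> sW_le dX f dY dU g dV \<and> sW_le dU g dV dX f dY"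

definition delta_01 :: "nat rep" where
  "delta_01 p = (if p 0 \<le> 1 then Some (p 0) else None)"

text \<open>lim: <p0,p1,...> (with <p0,p1,...><i,j> = p_i(j)) \<mapsto> lim p_i in Baire space.\<close>
definition lim_conv :: "baire \<Rightarrow> baire \<Rightarrow> bool" where
  "lim_conv p q \<longleftrightarrow> (\<forall>j. \<exists>N. \<forall>i\<ge>N. p (prod_encode (i, j)) = q j)"

definition delta_lim :: "baire rep" where
  "delta_lim p = (if \<exists>q. lim_conv p q then Some (THE q. lim_conv p q) else None)"

definition LPO :: "(baire, nat) problem" where
  "LPO p = {if \<exists>n. p n = 0 then 0 else 1}"

type_synonym cantor = "nat \<Rightarrow> bool"

definition binword :: "nat \<Rightarrow> bool list" where
  "binword n = map odd (list_decode n)"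

definition Bball :: "nat \<Rightarrow> cantor set" where
  "Bball n = (case n of 0 \<Rightarrow> {}
     | Suc m \<Rightarrow> {x. map x [0..<length (binword m)] = binword m})"

definition delta_closed :: "cantor set rep" where
  "delta_closed p = Some (UNIV - (\<Union>n. Bball (p n)))"

definition cantor_measure :: "cantor measure" where
  "cantor_measure = PiM UNIV (\<lambda>_::nat. measure_pmf (bernoulli_pmf (1/2)))"

definition NEG :: "(cantor set, nat) problem" where
  "NEG A = {if emeasure cantor_measure A = 0 then 1 else 0}"

end

theory Submission
  imports Defs
begin


abbreviation fd :: "nat \<Rightarrow> nat" where "fd x \<equiv> fst (prod_decode x)"
abbreviation sd :: "nat \<Rightarrow> nat" where "sd x \<equiv> snd (prod_decode x)"

definition PRe :: "nat \<Rightarrow> ((nat \<Rightarrow> nat) \<Rightarrow> nat) \<Rightarrow> bool" where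
  "PRe n F \<longleftrightarrow> (\<exists>f. PR n f \<and> (\<forall>\<sigma>. f (map \<sigma> [0..<n]) = F \<sigma>))"

lemma PRe_cong: "PRe n F \<Longrightarrow> (\<And>\<sigma>. F \<sigma> = G \<sigma>) \<Longrightarrow> PRe n G"
  unfolding PRe_def by (metis (no_types))

lemma PRe_var: "i < n \<Longrightarrow> PRe n (\<lambda>\<sigma>. \<sigma> i)"
  unfolding PRe_def by (rule exI[of _ "\<lambda>xs. xs ! i"]) (simp add: PR_proj)

lemma PRe_zero: "PRe n (\<lambda>\<sigma>. 0)"
  unfolding PRe_def by (rule exI[of _ "\<lambda>xs. 0"]) (simp add: PR_zero)

lemma PRe_comp:
  assumes G: "PRe m G" and fs: "\<And>i. i < m \<Longrightarrow> PRe n (fs i)"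
  shows "PRe n (\<lambda>\<sigma>. G (\<lambda>i. fs i \<sigma>))"
proof -
  obtain g where g: "PR m g" "\<And>\<tau>. g (map \<tau> [0..<m]) = G \<tau>" using G unfolding PRe_def by blast
  have "\<forall>i\<in>{..<m}. \<exists>f. PR n f \<and> (\<forall>\<sigma>. f (map \<sigma> [0..<n]) = fs i \<sigma>)"
    using fs unfolding PRe_def by blast
  from bchoice[OF this] obtain ff where ff0: "\<forall>i\<in>{..<m}. PR n (ff i) \<and> (\<forall>\<sigma>. ff i (map \<sigma> [0..<n]) = fs i \<sigma>)"
    by blast
  have ff: "\<And>i. i < m \<Longrightarrow> PR n (ff i) \<and> (\<forall>\<sigma>. ff i (map \<sigma> [0..<n]) = fs i \<sigma>)"
    using ff0 by simp
  have "PR n (\<lambda>xs. g (map (\<lambda>f. f xs) (map ff [0..<m])))"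
    by (rule PR_comp[OF g(1)]) (auto simp: ff)
  moreover have "g (map (\<lambda>f. f (map \<sigma> [0..<n])) (map ff [0..<m])) = G (\<lambda>i. fs i \<sigma>)" for \<sigma>
  proof -
    have eq: "map (\<lambda>f. f (map \<sigma> [0..<n])) (map ff [0..<m]) = map (\<lambda>i. fs i \<sigma>) [0..<m]"
      by (auto simp: ff)
    show ?thesis unfolding eq by (rule g(2))
  qed
  ultimately show ?thesis unfolding PRe_def by (intro exI conjI allI)
qed

lemma PRe_succ1: "PRe 1 (\<lambda>\<sigma>. Suc (\<sigma> 0))"
  unfolding PRe_def using PR_succ by (intro exI[of _ "\<lambda>xs. Suc (xs ! 0)"]) simp

lemma PRe_Suc: "PRe n f \<Longrightarrow> PRe n (\<lambda>\<sigma>. Suc (f \<sigma>))"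
  using PRe_comp[OF PRe_succ1, of n "\<lambda>i. f"] by simp

lemma PRe_rec:
  assumes G: "PRe n G" and H: "PRe (Suc (Suc n)) H"
  shows "PRe (Suc n) (\<lambda>\<sigma>. rec_nat (G (\<lambda>i. \<sigma> (Suc i)))
      (\<lambda>k acc. H (case_nat k (case_nat acc (\<lambda>i. \<sigma> (Suc i))))) (\<sigma> 0))"
proof -
  obtain g where g: "PR n g" "\<And>\<tau>. g (map \<tau> [0..<n]) = G \<tau>" using G unfolding PRe_def by blast
  obtain h where h: "PR (Suc (Suc n)) h" "\<And>\<tau>. h (map \<tau> [0..<Suc (Suc n)]) = H \<tau>" using H unfolding PRe_def by blast
  have h2: "PR (n + 2) h" using h(1) by (simp add: numeral_2_eq_2)
  have "PR (Suc n) (\<lambda>xs. rec_nat (g (tl xs)) (\<lambda>k acc. h (k # acc # tl xs)) (hd xs))"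
    by (rule PR_rec[OF g(1) h2])
  moreover have "rec_nat (g (tl (map \<sigma> [0..<Suc n]))) (\<lambda>k acc. h (k # acc # tl (map \<sigma> [0..<Suc n]))) (hd (map \<sigma> [0..<Suc n]))
     = rec_nat (G (\<lambda>i. \<sigma> (Suc i))) (\<lambda>k acc. H (case_nat k (case_nat acc (\<lambda>i. \<sigma> (Suc i))))) (\<sigma> 0)" for \<sigma>
  proof -
    have e1: "map \<sigma> [0..<Suc n] = \<sigma> 0 # map (\<lambda>i. \<sigma> (Suc i)) [0..<n]" by (rule map_upt_Suc)
    have e2: "h (k # acc # map (\<lambda>i. \<sigma> (Suc i)) [0..<n]) = H (case_nat k (case_nat acc (\<lambda>i. \<sigma> (Suc i))))" for k acc
      using h(2)[of "case_nat k (case_nat acc (\<lambda>i. \<sigma> (Suc i)))"] by (simp add: map_upt_Suc del: upt_Suc)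
    show ?thesis by (simp only: e1 list.sel e2 g(2))
  qed
  ultimately show ?thesis unfolding PRe_def by (intro exI conjI allI)
qed

lemma PRe_reindex:
  assumes "PRe m F" "\<And>i. i < m \<Longrightarrow> r i < n"
  shows "PRe n (\<lambda>\<sigma>. F (\<lambda>i. \<sigma> (r i)))"
  by (rule PRe_comp[OF assms(1), of n "\<lambda>i \<sigma>. \<sigma> (r i)", simplified]) (rule PRe_var, rule assms(2))

lemma PRe_prim:
  assumes G: "PRe n (\<lambda>\<sigma>. G \<sigma>)"
    and H: "PRe (Suc (Suc n)) (\<lambda>\<sigma>. H (\<sigma> 0) (\<sigma> 1) (\<lambda>i. \<sigma> (Suc (Suc i))))"
    and B: "PRe n (\<lambda>\<sigma>. B \<sigma>)"
  shows "PRe n (\<lambda>\<sigma>. rec_nat (G \<sigma>) (\<lambda>k acc. H k acc \<sigma>) (B \<sigma>))"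
proof -
  have R: "PRe (Suc n) (\<lambda>\<sigma>. rec_nat (G (\<lambda>i. \<sigma> (Suc i)))
      (\<lambda>k acc. (\<lambda>\<tau>. H (\<tau> 0) (\<tau> 1) (\<lambda>i. \<tau> (Suc (Suc i)))) (case_nat k (case_nat acc (\<lambda>i. \<sigma> (Suc i))))) (\<sigma> 0))"
    by (rule PRe_rec[OF G H])
  have "PRe n (\<lambda>\<sigma>. (\<lambda>\<sigma>. rec_nat (G (\<lambda>i. \<sigma> (Suc i)))
      (\<lambda>k acc. (\<lambda>\<tau>. H (\<tau> 0) (\<tau> 1) (\<lambda>i. \<tau> (Suc (Suc i)))) (case_nat k (case_nat acc (\<lambda>i. \<sigma> (Suc i))))) (\<sigma> 0))
     (\<lambda>i. case_nat B (\<lambda>j \<sigma>. \<sigma> j) i \<sigma>))"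
    apply (rule PRe_comp[OF R])
    subgoal for i using B by (cases i) (auto intro: PRe_var)
    done
  then show ?thesis
    apply (rule PRe_cong)
    apply (simp add: One_nat_def)
    done
qed

lemma PRe_const: "PRe n (\<lambda>\<sigma>. c)"
  by (induction c) (auto intro: PRe_zero PRe_Suc)

lemma PRe_shift1: "PRe n f \<Longrightarrow> PRe (Suc n) (\<lambda>\<sigma>. f (\<lambda>i. \<sigma> (Suc i)))"
  by (rule PRe_reindex) auto

lemma PRe_shift2: "PRe n f \<Longrightarrow> PRe (Suc (Suc n)) (\<lambda>\<sigma>. f (\<lambda>i. \<sigma> (Suc (Suc i))))"
  by (rule PRe_reindex) auto

lemma PRe_add: "PRe n f \<Longrightarrow> PRe n g \<Longrightarrow> PRe n (\<lambda>\<sigma>. f \<sigma> + g \<sigma>)"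
proof -
  assume f: "PRe n f" and g: "PRe n g"
  have "PRe n (\<lambda>\<sigma>. rec_nat (f \<sigma>) (\<lambda>k acc. Suc acc) (g \<sigma>))"
    by (rule PRe_prim[OF f _ g]) (auto intro: PRe_Suc PRe_var)
  moreover have "rec_nat a (\<lambda>k acc. Suc acc) b = a + b" for a b :: nat
    by (induction b) auto
  ultimately show ?thesis by (simp add: add.commute)
qed

lemma PRe_pred: "PRe n f \<Longrightarrow> PRe n (\<lambda>\<sigma>. f \<sigma> - 1)"
proof -
  assume f: "PRe n f"
  have "PRe n (\<lambda>\<sigma>. rec_nat 0 (\<lambda>k acc. k) (f \<sigma>))"
    by (rule PRe_prim[OF PRe_const _ f]) (auto intro: PRe_var)
  moreover have "rec_nat 0 (\<lambda>k acc. k) b = b - 1" for b :: nat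
    by (cases b) auto
  ultimately show ?thesis by simp
qed

lemma PRe_sub: "PRe n f \<Longrightarrow> PRe n g \<Longrightarrow> PRe n (\<lambda>\<sigma>. f \<sigma> - g \<sigma>)"
proof -
  assume f: "PRe n f" and g: "PRe n g"
  have "PRe n (\<lambda>\<sigma>. rec_nat (f \<sigma>) (\<lambda>k acc. acc - 1) (g \<sigma>))"
    by (rule PRe_prim[OF f _ g]) (intro PRe_pred PRe_var, simp)
  moreover have "rec_nat a (\<lambda>k acc. acc - 1) b = a - b" for a b :: nat
    by (induction b) auto
  ultimately show ?thesis by simp
qed

lemma PRe_sum:
  assumes F: "PRe (Suc n) (\<lambda>\<sigma>. F (\<sigma> 0) (\<lambda>i. \<sigma> (Suc i)))" and B: "PRe n B"
  shows "PRe n (\<lambda>\<sigma>. \<Sum>y<B \<sigma>. F y \<sigma>)"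
proof -
  have "PRe (Suc (Suc n)) (\<lambda>\<sigma>. (\<lambda>\<sigma>. F (\<sigma> 0) (\<lambda>i. \<sigma> (Suc i))) (\<lambda>i. \<sigma> (case_nat 0 (\<lambda>i. Suc (Suc i)) i)))"
    by (rule PRe_reindex[OF F]) (auto split: nat.split)
  then have F2: "PRe (Suc (Suc n)) (\<lambda>\<sigma>. F (\<sigma> 0) (\<lambda>i. \<sigma> (Suc (Suc i))))"
    by simp
  have "PRe n (\<lambda>\<sigma>. rec_nat 0 (\<lambda>k acc. acc + F k \<sigma>) (B \<sigma>))"
    by (rule PRe_prim[OF PRe_const _ B]) (auto intro!: PRe_add PRe_var F2)
  moreover have "rec_nat 0 (\<lambda>k acc. acc + F k s) b = (\<Sum>y<b. F y s)" for b s
    by (induction b) auto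
  ultimately show ?thesis by simp
qed

lemma PRe_mult: "PRe n f \<Longrightarrow> PRe n g \<Longrightarrow> PRe n (\<lambda>\<sigma>. f \<sigma> * g \<sigma>)"
proof -
  assume f: "PRe n f" and g: "PRe n g"
  have "PRe n (\<lambda>\<sigma>. \<Sum>y<g \<sigma>. f \<sigma>)"
    by (rule PRe_sum[OF _ g]) (rule PRe_shift1[OF f])
  then show ?thesis by (simp add: mult.commute)
qed

lemma PRe_pow: "PRe n f \<Longrightarrow> PRe n g \<Longrightarrow> PRe n (\<lambda>\<sigma>. f \<sigma> ^ g \<sigma>)"
proof -
  assume f: "PRe n f" and g: "PRe n g"
  have "PRe n (\<lambda>\<sigma>. rec_nat 1 (\<lambda>k acc. acc * f \<sigma>) (g \<sigma>))"
    by (rule PRe_prim[OF PRe_const _ g]) (auto intro!: PRe_mult PRe_var PRe_shift2 f)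
  moreover have "rec_nat 1 (\<lambda>k acc. acc * a) b = a ^ b" for a b :: nat
    by (induction b) auto
  ultimately show ?thesis by simp
qed

definition PRp :: "nat \<Rightarrow> ((nat \<Rightarrow> nat) \<Rightarrow> bool) \<Rightarrow> bool" where
  "PRp n P \<longleftrightarrow> PRe n (\<lambda>\<sigma>. if P \<sigma> then 1 else 0)"

lemma PRp_eq: assumes "PRe n f" "PRe n g" shows "PRp n (\<lambda>\<sigma>. f \<sigma> = g \<sigma>)"
proof -
  have "PRe n (\<lambda>\<sigma>. 1 - ((f \<sigma> - g \<sigma>) + (g \<sigma> - f \<sigma>)))"
    by (intro PRe_sub PRe_add PRe_const assms)
  then show ?thesis unfolding PRp_def by (rule PRe_cong) auto
qed

lemma PRp_le: assumes "PRe n f" "PRe n g" shows "PRp n (\<lambda>\<sigma>. f \<sigma> \<le> g \<sigma>)"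
proof -
  have "PRe n (\<lambda>\<sigma>. 1 - (f \<sigma> - g \<sigma>))"
    by (intro PRe_sub PRe_const assms)
  then show ?thesis unfolding PRp_def by (rule PRe_cong) auto
qed

lemma PRp_less: assumes "PRe n f" "PRe n g" shows "PRp n (\<lambda>\<sigma>. f \<sigma> < g \<sigma>)"
proof -
  have "PRe n (\<lambda>\<sigma>. 1 - (Suc (f \<sigma>) - g \<sigma>))"
    by (intro PRe_sub PRe_Suc PRe_const assms)
  then show ?thesis unfolding PRp_def by (rule PRe_cong) auto
qed

lemma PRp_not: assumes "PRp n P" shows "PRp n (\<lambda>\<sigma>. \<not> P \<sigma>)"
proof -
  have "PRe n (\<lambda>\<sigma>. 1 - (if P \<sigma> then 1 else 0))"
    using assms unfolding PRp_def by (intro PRe_sub PRe_const)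
  then show ?thesis unfolding PRp_def by (rule PRe_cong) auto
qed

lemma PRp_conj: assumes "PRp n P" "PRp n Q" shows "PRp n (\<lambda>\<sigma>. P \<sigma> \<and> Q \<sigma>)"
proof -
  have "PRe n (\<lambda>\<sigma>. (if P \<sigma> then 1 else 0) * (if Q \<sigma> then 1 else 0))"
    using assms unfolding PRp_def by (intro PRe_mult)
  then show ?thesis unfolding PRp_def by (rule PRe_cong) auto
qed

lemma PRp_disj: "PRp n P \<Longrightarrow> PRp n Q \<Longrightarrow> PRp n (\<lambda>\<sigma>. P \<sigma> \<or> Q \<sigma>)"
  using PRp_not[OF PRp_conj[OF PRp_not PRp_not]] by simp

lemma PRp_iff: assumes "PRp n P" "PRp n Q" shows "PRp n (\<lambda>\<sigma>. P \<sigma> \<longleftrightarrow> Q \<sigma>)"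
proof -
  have "PRp n (\<lambda>\<sigma>. (if P \<sigma> then 1 else 0) = (if Q \<sigma> then 1 else (0::nat)))"
    by (rule PRp_eq[OF assms[unfolded PRp_def]])
  then show ?thesis unfolding PRp_def by (rule PRe_cong) auto
qed

lemma PRe_if: assumes "PRp n P" "PRe n f" "PRe n g"
  shows "PRe n (\<lambda>\<sigma>. if P \<sigma> then f \<sigma> else g \<sigma>)"
proof -
  have "PRe n (\<lambda>\<sigma>. (if P \<sigma> then 1 else 0) * f \<sigma> + (1 - (if P \<sigma> then 1 else 0)) * g \<sigma>)"
    using assms unfolding PRp_def by (intro PRe_add PRe_mult PRe_sub PRe_const)
  then show ?thesis by (rule PRe_cong) auto
qed

lemma PRp_ex:
  assumes "PRp (Suc n) (\<lambda>\<sigma>. P (\<sigma> 0) (\<lambda>i. \<sigma> (Suc i)))" "PRe n B"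
  shows "PRp n (\<lambda>\<sigma>. \<exists>y<B \<sigma>. P y \<sigma>)"
proof -
  have "PRe n (\<lambda>\<sigma>. 1 - (1 - (\<Sum>y<B \<sigma>. if P y \<sigma> then 1 else 0)))"
    using assms unfolding PRp_def by (intro PRe_sub PRe_const PRe_sum)
  moreover have "(1 - (1 - (\<Sum>y<b. if P y s then 1 else (0::nat)))) = (if \<exists>y<b. P y s then 1 else 0)" for b s
  proof (cases "\<exists>y<b. P y s")
    case True
    then obtain y where "y < b" "P y s" by blast
    then have "1 \<le> (\<Sum>y<b. if P y s then 1 else (0::nat))"
      using member_le_sum[of y "{..<b}" "\<lambda>y. if P y s then 1 else (0::nat)"] by auto
    with True show ?thesis by simp
  qed auto
  ultimately show ?thesis unfolding PRp_def by simp
qed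

lemma PRp_all:
  assumes "PRp (Suc n) (\<lambda>\<sigma>. P (\<sigma> 0) (\<lambda>i. \<sigma> (Suc i)))" "PRe n B"
  shows "PRp n (\<lambda>\<sigma>. \<forall>y<B \<sigma>. P y \<sigma>)"
  using PRp_not[OF PRp_ex[OF PRp_not[OF assms(1)] assms(2)]] by simp

lemma PRp_const: "PRp n (\<lambda>\<sigma>. b)"
  unfolding PRp_def by (rule PRe_const)

lemmas PRe_basic = PRe_const PRe_var PRe_Suc PRe_add PRe_sub PRe_mult PRe_pow PRe_if
  PRp_eq PRp_le PRp_less PRp_not PRp_conj PRp_disj PRp_iff PRp_const

lemma sum_ind_less: "(\<Sum>y<a. if y < d then 1 else (0::nat)) = min a d"
  by (induction a) auto

lemma div_as_sum: "0 < b \<Longrightarrow> a div b = (\<Sum>y<a. if Suc y * b \<le> a then 1 else (0::nat))"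
proof -
  assume b: "0 < b"
  have "(\<Sum>y<a. if Suc y * b \<le> a then 1 else (0::nat)) = (\<Sum>y<a. if y < a div b then 1 else (0::nat))"
  proof (intro sum.cong refl)
    fix y
    have "Suc y * b \<le> a \<longleftrightarrow> y < a div b"
      by (metis Suc_le_eq less_eq_div_iff_mult_less_eq b)
    then show "(if Suc y * b \<le> a then 1 else (0::nat)) = (if y < a div b then 1 else 0)" by simp
  qed
  also have "\<dots> = a div b" using b by (simp add: sum_ind_less min_absorb2)
  finally show ?thesis by simp
qed

lemma PRe_div: assumes f: "PRe n f" and g: "PRe n g" shows "PRe n (\<lambda>\<sigma>. f \<sigma> div g \<sigma>)"
proof -
  have "PRe n (\<lambda>\<sigma>. if g \<sigma> = 0 then 0 else (\<Sum>y<f \<sigma>. if Suc y * g \<sigma> \<le> f \<sigma> then 1 else 0))"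
    by (intro PRe_basic PRe_sum f g PRe_shift1[OF f] PRe_shift1[OF g]) simp_all
  then show ?thesis by (rule PRe_cong) (simp add: div_as_sum)
qed

lemma triangle_sum: "triangle a = (\<Sum>y<Suc a. y)"
  by (induction a) auto

lemma PRe_triangle: assumes f: "PRe n f" shows "PRe n (\<lambda>\<sigma>. triangle (f \<sigma>))"
proof -
  have "PRe n (\<lambda>\<sigma>. \<Sum>y<Suc (f \<sigma>). y)"
    by (intro PRe_basic PRe_sum f) simp_all
  then show ?thesis by (rule PRe_cong) (simp add: triangle_sum)
qed

lemma PRe_penc: assumes f: "PRe n f" and g: "PRe n g" shows "PRe n (\<lambda>\<sigma>. prod_encode (f \<sigma>, g \<sigma>))"
proof -
  have "PRe n (\<lambda>\<sigma>. triangle (f \<sigma> + g \<sigma>) + f \<sigma>)"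
    by (intro PRe_basic PRe_triangle f g)
  then show ?thesis by (rule PRe_cong) (simp add: prod_encode_def)
qed

lemma triangle_mono: "a \<le> b \<Longrightarrow> triangle a \<le> triangle b"
  unfolding triangle_def by (intro div_le_mono mult_le_mono) auto

lemma triangle_ge: "a \<le> triangle a"
  by (induction a) auto

definition Sdiag :: "nat \<Rightarrow> nat" where
  "Sdiag x = (\<Sum>y<x. if triangle (Suc y) \<le> x then 1 else 0)"

lemma Sdiag_eq: "Sdiag x = fst (prod_decode x) + snd (prod_decode x)"
proof -
  obtain a b where ab: "prod_decode x = (a, b)" by (cases "prod_decode x")
  then have "x = prod_encode (a, b)" using prod_decode_inverse[of x] by simp
  then have x: "x = triangle (a + b) + a" by (simp add: prod_encode_def)
  have iff: "triangle (Suc y) \<le> x \<longleftrightarrow> y < a + b" for y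
  proof
    assume "y < a + b"
    then have "triangle (Suc y) \<le> triangle (a + b)" by (intro triangle_mono) simp
    then show "triangle (Suc y) \<le> x" using x by simp
  next
    assume h: "triangle (Suc y) \<le> x"
    show "y < a + b"
    proof (rule ccontr)
      assume "\<not> y < a + b"
      then have "triangle (Suc (a + b)) \<le> triangle (Suc y)" by (intro triangle_mono) simp
      then show False using h x by simp
    qed
  qed
  have "a + b \<le> x" using x triangle_ge[of "a+b"] by simp
  then have "Sdiag x = a + b"
    unfolding Sdiag_def iff by (simp add: sum_ind_less min_def)
  then show ?thesis using ab by simp
qed

lemma fst_decode: "fst (prod_decode x) = x - triangle (Sdiag x)"
proof -
  obtain a b where ab: "prod_decode x = (a, b)" by (cases "prod_decode x")
  then have "x = prod_encode (a, b)" using prod_decode_inverse[of x] by simp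
  then have x: "x = triangle (a + b) + a" by (simp add: prod_encode_def)
  show ?thesis using ab x Sdiag_eq[of x] by simp
qed

lemma snd_decode: "snd (prod_decode x) = Sdiag x - fst (prod_decode x)"
  using Sdiag_eq[of x] by simp

lemma PRe_Sdiag: assumes f: "PRe n f" shows "PRe n (\<lambda>\<sigma>. Sdiag (f \<sigma>))"
proof -
  have "PRe n (\<lambda>\<sigma>. \<Sum>y<f \<sigma>. if triangle (Suc y) \<le> f \<sigma> then 1 else 0)"
    by (intro PRe_basic PRe_sum PRe_triangle f PRe_shift1[OF f]) simp_all
  then show ?thesis by (rule PRe_cong) (simp add: Sdiag_def)
qed

lemma PRe_fstd: assumes f: "PRe n f" shows "PRe n (\<lambda>\<sigma>. fst (prod_decode (f \<sigma>)))"
proof -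
  have "PRe n (\<lambda>\<sigma>. f \<sigma> - triangle (Sdiag (f \<sigma>)))"
    by (intro PRe_basic PRe_triangle PRe_Sdiag f)
  then show ?thesis by (rule PRe_cong) (simp add: fst_decode)
qed

lemma PRe_sndd: assumes f: "PRe n f" shows "PRe n (\<lambda>\<sigma>. snd (prod_decode (f \<sigma>)))"
proof -
  have "PRe n (\<lambda>\<sigma>. Sdiag (f \<sigma>) - fst (prod_decode (f \<sigma>)))"
    by (intro PRe_basic PRe_fstd PRe_Sdiag f)
  then show ?thesis by (rule PRe_cong) (simp add: snd_decode[symmetric])
qed

definition tl_iter :: "nat \<Rightarrow> nat \<Rightarrow> nat" where
  "tl_iter i c = rec_nat c (\<lambda>k acc. if acc = 0 then 0 else snd (prod_decode (acc - 1))) i"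

lemma tl_iter_0[simp]: "tl_iter 0 c = c" by (simp add: tl_iter_def)
lemma tl_iter_Suc[simp]: "tl_iter (Suc i) c = (if tl_iter i c = 0 then 0 else snd (prod_decode (tl_iter i c - 1)))"
  by (simp add: tl_iter_def)

lemma list_decode_eq_Nil: "list_decode c = [] \<longleftrightarrow> c = 0"
  by (cases c) (auto split: prod.split)

lemma list_decode_tl_iter: "list_decode (tl_iter i c) = drop i (list_decode c)"
proof (induction i)
  case 0 then show ?case by simp
next
  case (Suc i)
  show ?case
  proof (cases "tl_iter i c")
    case 0
    then show ?thesis using Suc by (simp add: drop_Suc tl_drop[symmetric])
  next
    case (Suc m)
    then have "drop i (list_decode c) = fst (prod_decode m) # list_decode (snd (prod_decode m))"
      using Suc.IH by (simp add: case_prod_beta)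
    then have "drop (Suc i) (list_decode c) = list_decode (snd (prod_decode m))"
      by (simp add: drop_Suc tl_drop[symmetric])
    then show ?thesis using Suc by simp
  qed
qed

lemma length_list_decode_le: "length (list_decode c) \<le> c"
proof (induction c rule: less_induct)
  case (less c)
  show ?case
  proof (cases c)
    case 0 then show ?thesis by simp
  next
    case (Suc m)
    obtain a b where ab: "prod_decode m = (a, b)" by (cases "prod_decode m")
    have "m = prod_encode (a, b)" using ab prod_decode_inverse[of m] by simp
    then have "b \<le> m" using le_prod_encode_2[of b a] by simp
    then have "length (list_decode b) \<le> b" using less Suc by simp
    then show ?thesis using Suc ab \<open>b \<le> m\<close> by simp
  qed
qed

lemma tl_iter_nz: "tl_iter i c \<noteq> 0 \<longleftrightarrow> i < length (list_decode c)"
proof -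
  have "tl_iter i c \<noteq> 0 \<longleftrightarrow> list_decode (tl_iter i c) \<noteq> []" by (simp add: list_decode_eq_Nil)
  then show ?thesis by (auto simp add: list_decode_tl_iter)
qed

definition lenc :: "nat \<Rightarrow> nat" where
  "lenc c = (\<Sum>i<c. if tl_iter i c = 0 then 0 else 1)"

lemma lenc_eq: "lenc c = length (list_decode c)"
proof -
  have "lenc c = (\<Sum>i<c. if i < length (list_decode c) then 1 else 0)"
    unfolding lenc_def by (intro sum.cong) (auto simp: tl_iter_nz[symmetric])
  then show ?thesis using length_list_decode_le[of c] by (simp add: sum_ind_less min_def)
qed

definition nthc :: "nat \<Rightarrow> nat \<Rightarrow> nat" where
  "nthc c i = fst (prod_decode (tl_iter i c - 1))"

lemma nthc_eq: "i < length (list_decode c) \<Longrightarrow> nthc c i = list_decode c ! i"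
proof -
  assume i: "i < length (list_decode c)"
  then obtain m where m: "tl_iter i c = Suc m" using tl_iter_nz[of i c] by (cases "tl_iter i c") auto
  have "drop i (list_decode c) = fst (prod_decode m) # list_decode (snd (prod_decode m))"
    using list_decode_tl_iter[of i c] m by (simp add: case_prod_beta)
  then have "list_decode c ! i = fst (prod_decode m)"
    using i by (metis hd_drop_conv_nth list.sel(1))
  then show ?thesis using m by (simp add: nthc_def)
qed

lemma PRe_tl_iter: assumes f: "PRe n f" and g: "PRe n g" shows "PRe n (\<lambda>\<sigma>. tl_iter (f \<sigma>) (g \<sigma>))"
proof -
  have "PRe n (\<lambda>\<sigma>. rec_nat (g \<sigma>) (\<lambda>k acc. (\<lambda>k acc \<sigma>. if acc = 0 then 0 else snd (prod_decode (acc - 1))) k acc \<sigma>) (f \<sigma>))"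
    by (rule PRe_prim[OF g _ f]) (intro PRe_basic PRe_sndd PRe_zero; simp)
  then show ?thesis by (rule PRe_cong) (simp add: tl_iter_def)
qed

lemma PRe_lenc: assumes f: "PRe n f" shows "PRe n (\<lambda>\<sigma>. lenc (f \<sigma>))"
proof -
  have "PRe n (\<lambda>\<sigma>. \<Sum>i<f \<sigma>. if tl_iter i (f \<sigma>) = 0 then 0 else 1)"
    by (intro PRe_basic PRe_sum PRe_tl_iter f PRe_shift1[OF f]; simp)
  then show ?thesis by (rule PRe_cong) (simp add: lenc_def)
qed

lemma PRe_nthc: assumes f: "PRe n f" and g: "PRe n g" shows "PRe n (\<lambda>\<sigma>. nthc (f \<sigma>) (g \<sigma>))"
proof -
  have "PRe n (\<lambda>\<sigma>. fst (prod_decode (tl_iter (g \<sigma>) (f \<sigma>) - 1)))"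
    by (intro PRe_basic PRe_fstd PRe_tl_iter f g)
  then show ?thesis by (rule PRe_cong) (simp add: nthc_def)
qed

lemma PRp_odd: assumes f: "PRe n f" shows "PRp n (\<lambda>\<sigma>. odd (f \<sigma>))"
proof -
  have "PRp n (\<lambda>\<sigma>. \<not> (\<exists>y<Suc (f \<sigma>). f \<sigma> = y + y))"
    by (intro PRe_basic PRp_ex f PRe_shift1[OF f]; simp)
  moreover have "(\<not> (\<exists>y<Suc a. a = y + y)) \<longleftrightarrow> odd a" for a :: nat
    by presburger
  ultimately show ?thesis by simp
qed


lemma PRe_comp2: assumes F: "PRe 2 (\<lambda>\<sigma>. F (\<sigma> 0) (\<sigma> 1))" and f: "PRe n f" and g: "PRe n g"
  shows "PRe n (\<lambda>\<sigma>. F (f \<sigma>) (g \<sigma>))"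
proof -
  have prem: "\<And>i::nat. i < 2 \<Longrightarrow> PRe n (if i = 0 then f else g)" using f g by auto
  from PRe_comp[where fs="\<lambda>i. if i = 0 then f else g", OF F prem] show ?thesis by simp
qed

definition ecode :: "nat \<Rightarrow> nat" where
  "ecode m = rec_nat 3 (\<lambda>k acc. Suc (prod_encode (0, acc))) m"

lemma ecode_eq: "ecode m = list_encode (replicate m 0 @ [1])"
proof (induction m)
  case 0
  have "prod_encode (1, 0) = 2" by (simp add: prod_encode_def)
  then show ?case by (simp add: ecode_def)
next
  case (Suc m)
  then show ?case by (simp add: ecode_def)
qed

lemma PRe_ecode: assumes f: "PRe n f" shows "PRe n (\<lambda>\<sigma>. ecode (f \<sigma>))"
proof -
  have "PRe n (\<lambda>\<sigma>. rec_nat 3 (\<lambda>k acc. (\<lambda>k acc \<sigma>. Suc (prod_encode (0, acc))) k acc \<sigma>) (f \<sigma>))"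
    by (rule PRe_prim[OF PRe_const _ f]) (intro PRe_basic PRe_penc; simp)
  then show ?thesis by (rule PRe_cong) (simp add: ecode_def)
qed

lemma prim_rec1_PRe: "PRe 1 (\<lambda>\<sigma>. g (\<sigma> 0)) \<Longrightarrow> prim_rec1 g"
  unfolding PRe_def prim_rec1_def
proof (elim exE conjE, intro exI conjI allI)
  fix f assume "PR 1 f" "\<forall>\<sigma>. f (map \<sigma> [0..<1]) = g (\<sigma> 0)"
  then show "PR 1 f" "g x = f [x]" for x by (auto dest: spec[of _ "\<lambda>_. x"])
qed

lemma computable_intro:
  assumes "prim_rec1 g"
    and "\<And>n ps. g (prod_encode (n, list_encode ps)) = (if need n \<le> length ps then Suc (V n ps) else 0)"
    and "\<And>p n k. need n \<le> k \<Longrightarrow> V n (map p [0..<k]) = Kf p n"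
  shows "computable_baire (\<lambda>p. Some (Kf p))"
  unfolding computable_baire_def
proof -
  have "\<forall>p q. Some (Kf p) = Some q \<longrightarrow> (\<forall>n.
        (\<exists>k. g (prod_encode (n, list_encode (map p [0..<k]))) \<noteq> 0) \<and>
        (\<forall>k. g (prod_encode (n, list_encode (map p [0..<k]))) \<noteq> 0 \<longrightarrow>
             g (prod_encode (n, list_encode (map p [0..<k]))) = Suc (q n)))"
  proof (intro allI impI conjI)
    fix p q n assume "Some (Kf p) = Some q"
    then have q: "q = Kf p" by simp
    show "\<exists>k. g (prod_encode (n, list_encode (map p [0..<k]))) \<noteq> 0"
      by (rule exI[of _ "need n"]) (simp add: assms(2))
    fix k assume "g (prod_encode (n, list_encode (map p [0..<k]))) \<noteq> 0"
    then show "g (prod_encode (n, list_encode (map p [0..<k]))) = Suc (q n)"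
      using assms(2,3) q by (auto split: if_splits)
  qed
  then show "\<exists>g. prim_rec1 g \<and> (\<forall>p q. Some (Kf p) = Some q \<longrightarrow> (\<forall>n.
        (\<exists>k. g (prod_encode (n, list_encode (map p [0..<k]))) \<noteq> 0) \<and>
        (\<forall>k. g (prod_encode (n, list_encode (map p [0..<k]))) \<noteq> 0 \<longrightarrow>
             g (prod_encode (n, list_encode (map p [0..<k]))) = Suc (q n))))"
    using assms(1) by blast
qed



definition cyl :: "nat \<Rightarrow> (nat \<Rightarrow> bool) \<Rightarrow> cantor set" where
  "cyl L w = {x. \<forall>e<L. x e = w e}"

lemma space_cm[simp]: "space cantor_measure = UNIV"
  unfolding cantor_measure_def by (simp add: space_PiM)

lemma prob_cm: "prob_space cantor_measure"
  unfolding cantor_measure_def by (intro prob_space_PiM prob_space_measure_pmf)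

lemma cyl_emb: "cyl L w = prod_emb UNIV (\<lambda>_::nat. measure_pmf (bernoulli_pmf (1/2))) {..<L} (Pi\<^sub>E {..<L} (\<lambda>e. {w e}))"
  unfolding cyl_def by (rule set_eqI) (simp add: prod_emb_def space_PiM PiE_iff extensional_def Ball_def)
lemma cyl_sets: "cyl L w \<in> sets cantor_measure"
  unfolding cyl_emb cantor_measure_def by (rule sets_PiM_I) auto

lemma cyl_emeasure: "emeasure cantor_measure (cyl L w) = ennreal ((1/2)^L)"
proof -
  have "\<And>e. emeasure (measure_pmf (bernoulli_pmf (1/2))) {w e} = ennreal (1/2)"
    by (simp add: emeasure_pmf_single pmf_bernoulli_True pmf_bernoulli_False split: bool.split)
  then have "emeasure cantor_measure (cyl L w) = (\<Prod>e\<in>{..<L}. ennreal (1/2))"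
    unfolding cyl_emb cantor_measure_def
    by (subst emeasure_PiM_emb) (simp_all add: prob_space_measure_pmf)
  then show ?thesis by (simp only: prod_constant card_lessThan ennreal_power[symmetric])
qed

interpretation CM: prob_space cantor_measure by (rule prob_cm)

lemma cyl_measure: "measure cantor_measure (cyl L w) = (1/2)^L"
proof -
  have "ennreal (measure cantor_measure (cyl L w)) = ennreal ((1/2)^L)"
    using cyl_emeasure[of L w] CM.emeasure_eq_measure[of "cyl L w"] by (simp only:)
  then show ?thesis by (subst (asm) ennreal_inj) auto
qed

lemma map_upt_eq_iff: "map x [0..<length w] = w \<longleftrightarrow> (\<forall>e<length w. x e = w ! e)"
proof -
  have "map x [0..<length w] = w \<longleftrightarrow> map x [0..<length w] = map (nth w) [0..<length w]"
    by (simp only: map_nth)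
  also have "\<dots> \<longleftrightarrow> (\<forall>e\<in>set [0..<length w]. x e = w ! e)" by (rule map_eq_conv)
  also have "\<dots> \<longleftrightarrow> (\<forall>e<length w. x e = w ! e)" unfolding set_upt Ball_def atLeastLessThan_iff by (meson zero_le)
  finally show ?thesis .
qed

lemma Bball_Suc: "Bball (Suc m) = cyl (length (binword m)) (\<lambda>e. binword m ! e)"
  unfolding Bball_def cyl_def by (simp only: nat.case map_upt_eq_iff)

lemma Bball_sets: "Bball n \<in> sets cantor_measure"
  by (cases n) (simp add: Bball_def, simp only: Bball_Suc cyl_sets)

lemma closed_sets: fixes p :: "nat \<Rightarrow> nat" shows "UNIV - (\<Union>n. Bball (p n)) \<in> sets cantor_measure"
proof -
  have "(\<Union>n. Bball (p n)) \<in> sets cantor_measure"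
    using sets.countable_UN[of "\<lambda>n. Bball (p n)" UNIV cantor_measure] Bball_sets by auto
  then have "space cantor_measure - (\<Union>n. Bball (p n)) \<in> sets cantor_measure" by (rule sets.compl_sets)
  then show ?thesis by simp
qed

lemma NEG_eq: "A \<in> sets cantor_measure \<Longrightarrow> NEG A = {if measure cantor_measure A = 0 then 1 else 0}"
  unfolding NEG_def using CM.emeasure_eq_measure[of A] measure_nonneg[of cantor_measure A] by auto

lemma measure_zero_if_small:
  assumes "\<And>L. measure cantor_measure A \<le> (1/2)^L"
  shows "measure cantor_measure A = 0"
proof (rule ccontr)
  assume "measure cantor_measure A \<noteq> 0"
  then have pos: "measure cantor_measure A > 0" by (metis less_eq_real_def measure_nonneg)
  obtain L where "(1/2::real)^L < measure cantor_measure A"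
    using real_arch_pow_inv[OF pos, of "1/2"] by auto
  then show False using assms[of L] by simp
qed


definition bv :: "nat \<Rightarrow> nat \<Rightarrow> bool" where
  "bv v e = odd (v div 2 ^ e)"

lemma bv_0: "bv v 0 = odd v" by (simp add: bv_def)

lemma bv_Suc: "bv v (Suc e) = bv (v div 2) e"
  by (simp add: bv_def div_mult2_eq)

fun enc :: "nat \<Rightarrow> (nat \<Rightarrow> bool) \<Rightarrow> nat" where
  "enc 0 x = 0"
| "enc (Suc i) x = (if x 0 then 1 else 0) + 2 * enc i (\<lambda>e. x (Suc e))"

lemma enc_less: "enc i x < 2 ^ i"
proof (induction i arbitrary: x)
  case 0 then show ?case by simp
next
  case (Suc i)
  have "enc i (\<lambda>e. x (Suc e)) < 2 ^ i" by (rule Suc.IH)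
  then show ?case by simp
qed

lemma div2_aux: "((if b then 1 else 0) + 2 * w) div 2 = (w::nat)"
  by (cases b) auto

lemma enc_bv: "e < i \<Longrightarrow> bv (enc i x) e = x e"
proof (induction i arbitrary: x e)
  case 0 then show ?case by simp
next
  case (Suc i)
  show ?case
  proof (cases e)
    case 0 then show ?thesis by (simp add: bv_0)
  next
    case (Suc e')
    then have "e' < i" using Suc.prems by simp
    then show ?thesis using Suc.IH[of e' "\<lambda>e. x (Suc e)"] \<open>e = Suc e'\<close>
      by (simp only: bv_Suc enc.simps div2_aux)
  qed
qed

lemma bv_inj: "v < 2 ^ i \<Longrightarrow> v' < 2 ^ i \<Longrightarrow> (\<forall>e<i. bv v e = bv v' e) \<Longrightarrow> v = v'"
proof (induction i arbitrary: v v')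
  case 0 then show ?case by simp
next
  case (Suc i)
  have "v div 2 < 2 ^ i" "v' div 2 < 2 ^ i" using Suc.prems(1,2) by auto
  moreover have "\<forall>e<i. bv (v div 2) e = bv (v' div 2) e"
    using Suc.prems(3) by (auto simp: bv_Suc[symmetric])
  ultimately have d: "v div 2 = v' div 2" by (rule Suc.IH)
  have "odd v = odd v'" using Suc.prems(3) by (auto simp: bv_0[symmetric])
  then show ?case using d by (metis div_mult_mod_eq odd_iff_mod_2_eq_one even_iff_mod_2_eq_zero)
qed

lemma cell_iff: "v < 2 ^ i \<Longrightarrow> x \<in> cyl i (bv v) \<longleftrightarrow> v = enc i x"
proof
  assume v: "v < 2 ^ i" and "x \<in> cyl i (bv v)"
  then have "\<forall>e<i. bv v e = bv (enc i x) e" by (auto simp: cyl_def enc_bv)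
  then show "v = enc i x" using bv_inj[OF v enc_less] by blast
next
  assume "v = enc i x"
  then show "x \<in> cyl i (bv v)" by (auto simp: cyl_def enc_bv)
qed

lemma measure_cells:
  assumes S: "\<And>x. x \<in> S \<longleftrightarrow> Q (enc i x)"
  shows "measure cantor_measure S = real (\<Sum>v<2^i. if Q v then 1 else 0) * (1/2)^i"
proof -
  let ?A = "\<lambda>v. if Q v then cyl i (bv v) else {}"
  have "S = (\<Union>v\<in>{..<2^i}. ?A v)"
  proof (intro set_eqI iffI)
    fix x assume "x \<in> S"
    then have "Q (enc i x)" using S by simp
    then show "x \<in> (\<Union>v\<in>{..<2^i}. ?A v)"
      using cell_iff[OF enc_less[of i x], of x] enc_less[of i x] by auto
  next
    fix x assume "x \<in> (\<Union>v\<in>{..<2^i}. ?A v)"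
    then obtain v where v: "v < 2^i" "Q v" "x \<in> cyl i (bv v)" by (auto split: if_splits)
    then have "v = enc i x" using cell_iff by blast
    then show "x \<in> S" using S v by simp
  qed
  moreover have "measure cantor_measure (\<Union>v\<in>{..<2^i}. ?A v) = (\<Sum>v<2^i. measure cantor_measure (?A v))"
  proof (rule measure_finite_Union)
    show "?A ` {..<2^i} \<subseteq> sets cantor_measure" using cyl_sets by auto
    show "disjoint_family_on ?A {..<2^i}"
      unfolding disjoint_family_on_def using cell_iff by auto
    show "emeasure cantor_measure (?A v) \<noteq> \<infinity>" for v by (simp add: CM.emeasure_eq_measure)
  qed simp
  moreover have "(\<Sum>v<2^i. measure cantor_measure (?A v)) = (\<Sum>v<2^i. (if Q v then 1 else 0) * (1/2)^i)"
    by (intro sum.cong) (auto simp: cyl_measure)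
  ultimately have "measure cantor_measure S = (\<Sum>v<2^i. (if Q v then 1 else 0) * (1/2::real)^i)" by simp
  also have "\<dots> = (\<Sum>v<2^i. real (if Q v then 1 else 0)) * (1/2)^i"
    by (auto simp: sum_distrib_right intro!: sum.cong)
  also have "\<dots> = real (\<Sum>v<2^i. if Q v then 1 else 0) * (1/2)^i" by (simp only: of_nat_sum)
  finally show ?thesis .
qed


lemma Bball_iff: "x \<in> Bball n \<longleftrightarrow> n \<noteq> 0 \<and> (\<forall>e<length (list_decode (n - 1)). x e = odd (list_decode (n - 1) ! e))"
proof (cases n)
  case 0 then show ?thesis by (simp add: Bball_def)
next
  case (Suc m)
  then show ?thesis by (simp add: Bball_Suc cyl_def binword_def)
qed

lemma lim_conv_unique: "lim_conv p q1 \<Longrightarrow> lim_conv p q2 \<Longrightarrow> q1 = q2"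
proof (rule ext)
  fix j assume "lim_conv p q1" "lim_conv p q2"
  then obtain N1 N2 where "\<forall>i\<ge>N1. p (prod_encode (i, j)) = q1 j" "\<forall>i\<ge>N2. p (prod_encode (i, j)) = q2 j"
    unfolding lim_conv_def by blast
  then show "q1 j = q2 j" by (metis max.cobounded1 max.cobounded2)
qed

lemma delta_lim_Some: "lim_conv p q \<Longrightarrow> delta_lim p = Some q"
  unfolding delta_lim_def using lim_conv_unique by (auto intro!: the_equality)

lemma delta_lim_SomeD: "delta_lim p = Some x \<Longrightarrow> lim_conv p x"
proof -
  assume h: "delta_lim p = Some x"
  then obtain q where q: "lim_conv p q" unfolding delta_lim_def by (auto split: if_splits)
  then have "Ex (lim_conv p)" by blast
  then have "Some (THE q. lim_conv p q) = Some x" using h unfolding delta_lim_def by simp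
  then have "x = (THE q. lim_conv p q)" by simp
  moreover have "lim_conv p (THE q. lim_conv p q)" using theI[of "lim_conv p" q] q lim_conv_unique by blast
  ultimately show ?thesis by simp
qed

definition covered :: "nat \<Rightarrow> nat list \<Rightarrow> nat \<Rightarrow> bool" where
  "covered i ps v \<longleftrightarrow> (\<exists>t<i. ps ! t \<noteq> 0 \<and> length (list_decode (ps ! t - 1)) \<le> i \<and>
     (\<forall>e<length (list_decode (ps ! t - 1)). odd (list_decode (ps ! t - 1) ! e) = odd (v div 2 ^ e)))"

definition cnt :: "nat \<Rightarrow> nat list \<Rightarrow> nat" where
  "cnt i ps = (\<Sum>v<2^i. if covered i ps v then 1 else 0)"

definition Upart :: "(nat \<Rightarrow> nat) \<Rightarrow> nat \<Rightarrow> cantor set" where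
  "Upart p i = (\<Union>t\<in>{t. t < i \<and> length (list_decode (p t - 1)) \<le> i}. Bball (p t))"

lemma Upart_iff: "x \<in> Upart p i \<longleftrightarrow> covered i (map p [0..<i]) (enc i x)"
proof
  assume "x \<in> Upart p i"
  then obtain t where t: "t < i" "length (list_decode (p t - 1)) \<le> i" "x \<in> Bball (p t)"
    unfolding Upart_def by blast
  have ev: "\<forall>e<length (list_decode (p t - 1)). odd (enc i x div 2 ^ e) = x e"
    using t(2) enc_bv[unfolded bv_def, of _ i x] by auto
  show "covered i (map p [0..<i]) (enc i x)"
    unfolding covered_def using t ev by (auto simp: Bball_iff intro!: exI[of _ t])
next
  assume "covered i (map p [0..<i]) (enc i x)"
  then obtain t where t: "t < i" "p t \<noteq> 0" "length (list_decode (p t - 1)) \<le> i"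
    "\<forall>e<length (list_decode (p t - 1)). odd (list_decode (p t - 1) ! e) = odd (enc i x div 2 ^ e)"
    unfolding covered_def by auto
  have ev: "\<forall>e<length (list_decode (p t - 1)). odd (enc i x div 2 ^ e) = x e"
    using t(3) enc_bv[unfolded bv_def, of _ i x] by auto
  have "x \<in> Bball (p t)" using t ev by (auto simp: Bball_iff)
  then show "x \<in> Upart p i" unfolding Upart_def using t by blast
qed

lemma measure_Upart: "measure cantor_measure (Upart p i) = cnt i (map p [0..<i]) * (1/2)^i"
  unfolding cnt_def by (rule measure_cells) (rule Upart_iff)

lemma Upart_sets: "Upart p i \<in> sets cantor_measure"
  unfolding Upart_def by (intro sets.countable_UN) (auto simp: Bball_sets)

lemma Upart_mono: "i \<le> i' \<Longrightarrow> Upart p i \<subseteq> Upart p i'"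
  unfolding Upart_def by (rule UN_mono) auto

lemma Upart_Union: "(\<Union>i. Upart p i) = (\<Union>n. Bball (p n))"
proof (intro set_eqI iffI)
  fix x assume "x \<in> (\<Union>n. Bball (p n))"
  then obtain t where "x \<in> Bball (p t)" by blast
  then have "x \<in> Upart p (max (Suc t) (length (list_decode (p t - 1))))" unfolding Upart_def
    by (intro UN_I[of t]) auto
  then show "x \<in> (\<Union>i. Upart p i)" by blast
qed (auto simp: Upart_def)

lemma threshold_real: "real c * (1/2)^i \<le> 1 - (1/2)^j \<longleftrightarrow> real c * 2^j \<le> (2^j - 1) * (2^i::real)"
proof -
  define P :: real where "P = 2^i"
  define Q :: real where "Q = 2^j"
  have P: "P > 0" and Q: "Q > 0" by (simp_all add: P_def Q_def)
  have e1: "real c * (1/2)^i = real c / P" by (simp add: P_def power_one_over)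
  have e2: "1 - (1/2::real)^j = (Q - 1) / Q" using Q by (simp add: Q_def power_one_over diff_divide_distrib)
  have "real c / P \<le> (Q - 1) / Q \<longleftrightarrow> real c / P * (P * Q) \<le> (Q - 1) / Q * (P * Q)"
    using P Q by (intro mult_le_cancel_right_pos[symmetric]) simp
  also have "real c / P * (P * Q) = real c * Q" using P by simp
  also have "(Q - 1) / Q * (P * Q) = (Q - 1) * P" using Q by simp
  finally show ?thesis unfolding e1 e2 P_def Q_def .
qed
lemma threshold_iff: "c * 2^j \<le> (2^j - 1) * 2^i \<longleftrightarrow> real c * (1/2)^i \<le> 1 - (1/2)^j"
proof -
  have "c * 2^j \<le> (2^j - 1) * 2^i \<longleftrightarrow> real (c * 2^j) \<le> real ((2^j - 1) * 2^i)" by (rule of_nat_le_iff[symmetric])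
  also have "real ((2^j - 1) * 2^i) = (2^j - 1) * (2^i::real)" by (simp add: of_nat_diff)
  also have "real (c * 2^j) = real c * 2^j" by simp
  finally show ?thesis using threshold_real by simp
qed

definition thr :: "nat \<Rightarrow> nat \<Rightarrow> nat \<Rightarrow> nat" where
  "thr c i j = (if c * 2^j \<le> (2^j - 1) * 2^i then 0 else 1)"

definition Kf2 :: "(nat \<Rightarrow> nat) \<Rightarrow> nat \<Rightarrow> nat" where
  "Kf2 p n = thr (cnt (fd n) (map p [0..<fd n])) (fd n) (sd n)"

lemma Kf2_eq: "Kf2 p (prod_encode (i, j)) = (if measure cantor_measure (Upart p i) \<le> 1 - (1/2)^j then 0 else 1)"
  by (simp only: Kf2_def thr_def measure_Upart prod_encode_inverse fst_conv snd_conv threshold_iff)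

lemma exists_thr: "(\<exists>j. m \<le> 1 - (1/2::real)^j) \<longleftrightarrow> m < 1"
proof
  assume "\<exists>j. m \<le> 1 - (1/2::real)^j"
  then obtain j where "m \<le> 1 - (1/2::real)^j" by blast
  moreover have "(1/2::real)^j > 0" by simp
  ultimately show "m < 1" by linarith
next
  assume "m < 1"
  then obtain j where "(1/2::real)^j < 1 - m" using real_arch_pow_inv[of "1 - m" "1/2"] by auto
  then show "\<exists>j. m \<le> 1 - (1/2::real)^j" by (intro exI[of _ j]) simp
qed

lemma key2:
  fixes p :: "nat \<Rightarrow> nat"
  defines "U \<equiv> (\<Union>n. Bball (p n))"
  defines "x2 \<equiv> \<lambda>j. if measure cantor_measure U \<le> 1 - (1/2)^j then 0 else (1::nat)"
  shows "lim_conv (Kf2 p) x2 \<and> LPO x2 = NEG (UNIV - U)"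
proof
  have Usets: "U \<in> sets cantor_measure"
    unfolding U_def using sets.countable_UN[of "\<lambda>n. Bball (p n)" UNIV cantor_measure] Bball_sets by auto
  have sub: "Upart p i \<subseteq> U" for i using Upart_Union[of p] unfolding U_def by blast
  have lim: "(\<lambda>i. measure cantor_measure (Upart p i)) \<longlonglongrightarrow> measure cantor_measure U"
    using CM.finite_Lim_measure_incseq[of "Upart p"] Upart_sets Upart_mono Upart_Union[of p]
    unfolding U_def incseq_def by auto
  show "lim_conv (Kf2 p) x2"
    unfolding lim_conv_def
  proof
    fix j
    show "\<exists>N. \<forall>i\<ge>N. Kf2 p (prod_encode (i, j)) = x2 j"
    proof (cases "measure cantor_measure U \<le> 1 - (1/2)^j")
      case True
      have "measure cantor_measure (Upart p i) \<le> 1 - (1/2)^j" for i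
        using CM.finite_measure_mono[OF sub Usets, of i] True by linarith
      then show ?thesis using True by (auto simp: Kf2_eq x2_def)
    next
      case False
      then have "eventually (\<lambda>i. 1 - (1/2)^j < measure cantor_measure (Upart p i)) sequentially"
        by (intro order_tendstoD(1)[OF lim]) simp
      then obtain N where "\<forall>i\<ge>N. 1 - (1/2)^j < measure cantor_measure (Upart p i)"
        unfolding eventually_sequentially by blast
      then show ?thesis using False by (auto simp: Kf2_eq x2_def intro!: exI[of _ N])
    qed
  qed
  have cm: "measure cantor_measure (UNIV - U) = 1 - measure cantor_measure U"
    using CM.prob_compl[OF Usets] by simp
  have le1: "measure cantor_measure U \<le> 1" by (rule CM.prob_le_1)
  have "(\<exists>n. x2 n = 0) \<longleftrightarrow> measure cantor_measure U < 1"
    unfolding x2_def using exists_thr by auto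
  moreover have "measure cantor_measure (UNIV - U) = 0 \<longleftrightarrow> \<not> measure cantor_measure U < 1"
    using cm le1 by (smt (verit))
  ultimately show "LPO x2 = NEG (UNIV - U)"
    unfolding LPO_def using NEG_eq[OF closed_sets[of p]] unfolding U_def[symmetric] by auto
qed


definition Kf1 :: "(nat \<Rightarrow> nat) \<Rightarrow> nat \<Rightarrow> nat" where
  "Kf1 p t = (if sd (fd t) \<le> sd t \<and> p (prod_encode (sd t, fd (fd t))) \<noteq> 0 then Suc (ecode (fd t)) else 0)"

definition Cm :: "nat \<Rightarrow> cantor set" where
  "Cm m = {x. (\<forall>e<m. \<not> x e) \<and> x m}"

lemma Bball_ecode: "Bball (Suc (ecode m)) = Cm m"
proof -
  have ld: "list_decode (ecode m) = replicate m 0 @ [1]" by (simp add: ecode_eq)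
  have "x \<in> Bball (Suc (ecode m)) \<longleftrightarrow> (\<forall>e<Suc m. x e = odd ((replicate m 0 @ [1::nat]) ! e))" for x
    by (simp add: Bball_iff ld)
  also have "(\<forall>e<Suc m. x e = odd ((replicate m 0 @ [1::nat]) ! e)) \<longleftrightarrow> x \<in> Cm m" for x
  proof -
    have "(\<forall>e<Suc m. x e = odd ((replicate m 0 @ [1::nat]) ! e)) \<longleftrightarrow> (\<forall>e<Suc m. x e = (e = m))"
      by (intro all_cong) (auto simp: nth_append less_Suc_eq)
    also have "\<dots> \<longleftrightarrow> x \<in> Cm m" unfolding Cm_def by (auto simp: less_Suc_eq)
    finally show ?thesis .
  qed
  finally show ?thesis by blast
qed

lemma Cm_disj: "x \<in> Cm m \<Longrightarrow> x \<in> Cm m' \<Longrightarrow> m = m'"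
  unfolding Cm_def by (cases m m' rule: linorder_cases) auto

lemma Kf1_union:
  "x \<in> (\<Union>n. Bball (Kf1 p n)) \<longleftrightarrow> (\<exists>m. (\<exists>i\<ge>sd m. p (prod_encode (i, fd m)) \<noteq> 0) \<and> x \<in> Cm m)"
proof
  assume "x \<in> (\<Union>n. Bball (Kf1 p n))"
  then obtain n where n: "x \<in> Bball (Kf1 p n)" by blast
  then have "Kf1 p n \<noteq> 0" using Bball_iff by blast
  then have c: "sd (fd n) \<le> sd n \<and> p (prod_encode (sd n, fd (fd n))) \<noteq> 0" and k: "Kf1 p n = Suc (ecode (fd n))"
    unfolding Kf1_def by (auto split: if_splits)
  show "\<exists>m. (\<exists>i\<ge>sd m. p (prod_encode (i, fd m)) \<noteq> 0) \<and> x \<in> Cm m"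
    using n c unfolding k Bball_ecode by blast
next
  assume "\<exists>m. (\<exists>i\<ge>sd m. p (prod_encode (i, fd m)) \<noteq> 0) \<and> x \<in> Cm m"
  then obtain m i where mi: "sd m \<le> i" "p (prod_encode (i, fd m)) \<noteq> 0" "x \<in> Cm m" by blast
  then have "Kf1 p (prod_encode (m, i)) = Suc (ecode m)" by (simp add: Kf1_def)
  then have "x \<in> Bball (Kf1 p (prod_encode (m, i)))" using mi(3) by (simp add: Bball_ecode)
  then show "x \<in> (\<Union>n. Bball (Kf1 p n))" by blast
qed

lemma key1:
  assumes lim: "lim_conv p x"
  shows "NEG (UNIV - (\<Union>n. Bball (Kf1 p n))) = LPO x"
proof -
  define A where "A = UNIV - (\<Union>n. Bball (Kf1 p n))"
  have As: "A \<in> sets cantor_measure" unfolding A_def by (rule closed_sets)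
  show ?thesis
  proof (cases "\<exists>m. \<not> (\<exists>i\<ge>sd m. p (prod_encode (i, fd m)) \<noteq> 0)")
    case True
    then obtain m where m: "\<forall>i\<ge>sd m. p (prod_encode (i, fd m)) = 0" by auto
    have sub: "Cm m \<subseteq> A"
    proof
      fix y assume y: "y \<in> Cm m"
      have "y \<notin> (\<Union>n. Bball (Kf1 p n))"
      proof
        assume "y \<in> (\<Union>n. Bball (Kf1 p n))"
        then obtain m' where m': "\<exists>i\<ge>sd m'. p (prod_encode (i, fd m')) \<noteq> 0" "y \<in> Cm m'"
          unfolding Kf1_union by blast
        then have "m = m'" using Cm_disj[OF y] by simp
        then show False using m m'(1) by auto
      qed
      then show "y \<in> A" unfolding A_def by blast
    qed
    have "measure cantor_measure (Cm m) > 0"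
      unfolding Bball_ecode[symmetric] Bball_Suc cyl_measure by simp
    then have "measure cantor_measure A > 0"
      using CM.finite_measure_mono[OF sub As] by linarith
    then have "NEG A = {0}" using NEG_eq[OF As] by simp
    moreover have "\<exists>n. x n = 0"
    proof -
      obtain N where N: "\<forall>i\<ge>N. p (prod_encode (i, fd m)) = x (fd m)" using lim unfolding lim_conv_def by blast
      have "x (fd m) = p (prod_encode (max N (sd m), fd m))" using N by simp
      also have "\<dots> = 0" using m by simp
      finally show ?thesis by blast
    qed
    ultimately show ?thesis unfolding A_def[symmetric] LPO_def by simp
  next
    case False
    then have bad: "\<forall>m. \<exists>i\<ge>sd m. p (prod_encode (i, fd m)) \<noteq> 0" by blast
    have "A \<subseteq> cyl L (\<lambda>_. False)" for L
    proof
      fix y assume y: "y \<in> A"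
      show "y \<in> cyl L (\<lambda>_. False)"
      proof (rule ccontr)
        assume "y \<notin> cyl L (\<lambda>_. False)"
        then obtain e where "y e" unfolding cyl_def by auto
        define m where "m = (LEAST e. y e)"
        have "y m" unfolding m_def by (rule LeastI) fact
        moreover have "\<forall>e<m. \<not> y e" unfolding m_def using not_less_Least by blast
        ultimately have "y \<in> Cm m" unfolding Cm_def by blast
        then have "y \<in> (\<Union>n. Bball (Kf1 p n))" unfolding Kf1_union using bad by blast
        then show False using y unfolding A_def by blast
      qed
    qed
    then have "measure cantor_measure A \<le> (1/2)^L" for L
      using CM.finite_measure_mono[OF _ cyl_sets, of A L "\<lambda>_. False"] cyl_measure by simp
    then have "measure cantor_measure A = 0" by (rule measure_zero_if_small)
    then have "NEG A = {1}" using NEG_eq[OF As] by simp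
    moreover have "\<not> (\<exists>n. x n = 0)"
    proof
      assume "\<exists>n. x n = 0"
      then obtain n where xn: "x n = 0" by blast
      obtain N where N: "\<forall>i\<ge>N. p (prod_encode (i, n)) = x n" using lim unfolding lim_conv_def by blast
      obtain i where "i \<ge> sd (prod_encode (n, N))" "p (prod_encode (i, fd (prod_encode (n, N)))) \<noteq> 0"
        using bad by blast
      then show False using N xn by simp
    qed
    ultimately show ?thesis unfolding A_def[symmetric] LPO_def by simp
  qed
qed


section \<open>Computability\<close>

lemmas PRI = PRe_basic PRe_sum PRp_ex PRp_all PRe_div PRe_triangle PRe_penc PRe_fstd PRe_sndd
  PRe_lenc PRe_nthc PRp_odd PRe_ecode

definition g_id :: "nat \<Rightarrow> nat" where
  "g_id x = (if Suc (fd x) \<le> lenc (sd x) then Suc (nthc (sd x) (fd x)) else 0)"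

lemma comp_id: "computable_baire (\<lambda>p. Some p)"
proof -
  have "PRe 1 (\<lambda>\<sigma>. g_id (\<sigma> 0))" unfolding g_id_def by (intro PRI; simp)
  then have pr: "prim_rec1 g_id" by (rule prim_rec1_PRe)
  have "computable_baire (\<lambda>p. Some (\<lambda>n. p n))"
    by (rule computable_intro[OF pr, where need = Suc and V = "\<lambda>n ps. ps ! n"])
       (auto simp: g_id_def lenc_eq nthc_eq)
  then show ?thesis by simp
qed

definition g1 :: "nat \<Rightarrow> nat" where
  "g1 x = (if Suc (prod_encode (sd (fd x), fd (fd (fd x)))) \<le> lenc (sd x)
     then Suc (if sd (fd (fd x)) \<le> sd (fd x) \<and> nthc (sd x) (prod_encode (sd (fd x), fd (fd (fd x)))) \<noteq> 0
               then Suc (ecode (fd (fd x))) else 0) else 0)"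

lemma comp_K1: "computable_baire (\<lambda>p. Some (Kf1 p))"
proof -
  have "PRe 1 (\<lambda>\<sigma>. g1 (\<sigma> 0))" unfolding g1_def by (intro PRI; simp)
  then have pr: "prim_rec1 g1" by (rule prim_rec1_PRe)
  show ?thesis
    by (rule computable_intro[OF pr, where need = "\<lambda>t. Suc (prod_encode (sd t, fd (fd t)))"
          and V = "\<lambda>t ps. if sd (fd t) \<le> sd t \<and> ps ! prod_encode (sd t, fd (fd t)) \<noteq> 0 then Suc (ecode (fd t)) else 0"])
       (auto simp: g1_def lenc_eq nthc_eq Kf1_def)
qed

definition cntcd :: "nat \<Rightarrow> nat \<Rightarrow> nat" where
  "cntcd i c = (\<Sum>v<2^i. if (\<exists>t<i. nthc c t \<noteq> 0 \<and> lenc (nthc c t - 1) \<le> i \<and>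
       (\<forall>e<lenc (nthc c t - 1). odd (nthc (nthc c t - 1) e) = odd ((v::nat) div 2 ^ e))) then 1 else 0)"

lemma PRe_cntcd0: "PRe 2 (\<lambda>\<sigma>. cntcd (\<sigma> 0) (\<sigma> 1))"
  unfolding cntcd_def by (intro PRI; simp)

lemma PRe_cntcd: "PRe n f \<Longrightarrow> PRe n g \<Longrightarrow> PRe n (\<lambda>\<sigma>. cntcd (f \<sigma>) (g \<sigma>))"
  by (rule PRe_comp2[OF PRe_cntcd0])

lemma cntcd_eq: "i \<le> length ps \<Longrightarrow> cntcd i (list_encode ps) = cnt i ps"
  unfolding cntcd_def cnt_def covered_def
  by (intro sum.cong refl) (auto simp: lenc_eq nthc_eq)

lemma covered_cong: assumes "\<And>t. t < i \<Longrightarrow> ps ! t = qs ! t"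
  shows "covered i ps v = covered i qs v"
  unfolding covered_def by (simp add: assms cong: conj_cong)

lemma cnt_prefix: "i \<le> k \<Longrightarrow> cnt i (map p [0..<k]) = cnt i (map p [0..<i])"
  unfolding cnt_def by (intro sum.cong refl arg_cong[where f="\<lambda>b. if b then 1 else 0"] covered_cong) auto

lemma PRe_thr: assumes "PRe n f" "PRe n g" "PRe n h" shows "PRe n (\<lambda>\<sigma>. thr (f \<sigma>) (g \<sigma>) (h \<sigma>))"
  unfolding thr_def by (intro PRI assms)

definition g2 :: "nat \<Rightarrow> nat" where
  "g2 x = (if fd (fd x) \<le> lenc (sd x) then Suc (thr (cntcd (fd (fd x)) (sd x)) (fd (fd x)) (sd (fd x))) else 0)"

lemma comp_K2: "computable_baire (\<lambda>p. Some (Kf2 p))"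
proof -
  have "PRe 1 (\<lambda>\<sigma>. g2 (\<sigma> 0))" unfolding g2_def by (intro PRI PRe_cntcd PRe_thr; simp)
  then have pr: "prim_rec1 g2" by (rule prim_rec1_PRe)
  show ?thesis
  proof (rule computable_intro[OF pr, where need = "\<lambda>t. fd t"
          and V = "\<lambda>n ps. thr (cnt (fd n) ps) (fd n) (sd n)"])
    fix n ps
    show "g2 (prod_encode (n, list_encode ps)) = (if fd n \<le> length ps then Suc (thr (cnt (fd n) ps) (fd n) (sd n)) else 0)"
      by (cases "fd n \<le> length ps") (simp_all add: g2_def lenc_eq cntcd_eq)
  next
    fix p n k assume nk: "fd n \<le> k"
    show "thr (cnt (fd n) (map p [0..<k])) (fd n) (sd n) = Kf2 p n"
      unfolding Kf2_def cnt_prefix[OF nk] ..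
  qed
qed

lemma dir1: "sW_le delta_lim LPO delta_01 delta_closed NEG delta_01"
  unfolding sW_le_def
proof (intro exI conjI allI impI)
  show "computable_baire (\<lambda>p. Some p)" by (rule comp_id)
  show "computable_baire (\<lambda>p. Some (Kf1 p))" by (rule comp_K1)
  fix G assume G: "realizes delta_closed delta_01 G NEG"
  show "realizes delta_lim delta_01 (\<lambda>p. Option.bind (Some (Kf1 p)) (\<lambda>r. Option.bind (G r) (\<lambda>p. Some p))) LPO"
    unfolding realizes_def
  proof (intro allI impI)
    fix p x assume px: "delta_lim p = Some x"
    let ?A = "UNIV - (\<Union>n. Bball (Kf1 p n))"
    have "delta_closed (Kf1 p) = Some ?A" by (simp add: delta_closed_def)
    moreover have "?A \<in> pdom NEG" by (simp add: pdom_def NEG_def)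
    ultimately obtain q y where qy: "G (Kf1 p) = Some q" "delta_01 q = Some y" "y \<in> NEG ?A"
      using G unfolding realizes_def by blast
    have "NEG ?A = LPO x" by (rule key1[OF delta_lim_SomeD[OF px]])
    then show "\<exists>q y. Option.bind (Some (Kf1 p)) (\<lambda>r. Option.bind (G r) (\<lambda>p. Some p)) = Some q \<and>
        delta_01 q = Some y \<and> y \<in> LPO x" using qy by auto
  qed
qed

lemma dir2: "sW_le delta_closed NEG delta_01 delta_lim LPO delta_01"
  unfolding sW_le_def
proof (intro exI conjI allI impI)
  show "computable_baire (\<lambda>p. Some p)" by (rule comp_id)
  show "computable_baire (\<lambda>p. Some (Kf2 p))" by (rule comp_K2)
  fix G assume G: "realizes delta_lim delta_01 G LPO"
  show "realizes delta_closed delta_01 (\<lambda>p. Option.bind (Some (Kf2 p)) (\<lambda>r. Option.bind (G r) (\<lambda>p. Some p))) NEG"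
    unfolding realizes_def
  proof (intro allI impI)
    fix p A assume pA: "delta_closed p = Some A"
    then have A: "A = UNIV - (\<Union>n. Bball (p n))" by (simp add: delta_closed_def)
    define x2 where "x2 = (\<lambda>j. if measure cantor_measure (\<Union>n. Bball (p n)) \<le> 1 - (1/2)^j then 0 else (1::nat))"
    have k: "lim_conv (Kf2 p) x2 \<and> LPO x2 = NEG A" unfolding A x2_def by (rule key2)
    have "delta_lim (Kf2 p) = Some x2" using k by (simp add: delta_lim_Some)
    moreover have "x2 \<in> pdom LPO" by (simp add: pdom_def LPO_def)
    ultimately obtain q y where qy: "G (Kf2 p) = Some q" "delta_01 q = Some y" "y \<in> LPO x2"
      using G unfolding realizes_def by blast
    then show "\<exists>q y. Option.bind (Some (Kf2 p)) (\<lambda>r. Option.bind (G r) (\<lambda>p. Some p)) = Some q \<and>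
        delta_01 q = Some y \<and> y \<in> NEG A" using k by auto
  qed
qed

theorem lemma7p9:
  shows "sW_eq delta_lim LPO delta_01 delta_closed NEG delta_01"
  unfolding sW_eq_def using dir1 dir2 by blast


end
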